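(* Under the standing assumptions, let $\alpha^*(\eta)=\sup\{\theta\cdot\eta-\alpha(\theta):\theta\in\mathbb{R}^m\}$, $\eta\in\mathbb{R}^m$, be the convex conjugate of $\alpha$. Then $\alpha^*(\eta)<+\infty$ if and only if $\eta\in M$, where $M=\operatorname{conv}\{H(x):x\in\mathcal{X}\}\subset\mathbb{R}^m$ is the marginal polytope.
   Context: Standing assumptions. $\mathcal{X}$ is a finite set with a reference measure $\mu$ satisfying $\mu(x)>0$ for all $x$. $p:\mathcal{X}\to(0,\infty)$ is a strictly positive probability density w.r.t. $\mu$, i.e. $\sum_x p(x)\mu(x)=1$, and $\mathbb{E}_p[f]=\sum_x f(x)p(x)\mu(x)$. $\phi:(0,\infty)\to(0,\infty)$ is a positive, strictly increasing, absolutely continuous function with $\int_0^1 dy/\phi(y)=\int_1^{\infty}dy/\phi(y)=+\infty$. The $\phi$-logarithm is $\ln_\phi(v)=\int_1^v dy/\phi(y)$, $v>0$; it is a strictly increasing concave bijection $(0,\infty)\to\mathbb{R}$, and the $\phi$-exponential $\exp_\phi=\ln_\phi^{-1}:\mathbb{R}\to(0,\infty)$ is increasing, convex, differentiable, with $\exp_\phi'(u)=\phi(\exp_\phi(u))$, $\exp_\phi(0)=1$. Let $H=(H_1,\dots,H_m):\mathcal{X}\to\mathbb{R}^m$ be given statistics. For $\theta\in\mathbb{R}^m$, $\alpha(\theta)$ is the unique real number such that $\sum_x \exp_\phi(\theta\cdot H(x)-\alpha(\theta))\,p(x)\mu(x)=1$ (it exists and is unique since $a\mapsto\mathbb{E}_p[\exp_\phi(\theta\cdot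 H-a)]$ is continuous and strictly decreasing from $+\infty$ to $0$); the $\phi$-exponential family is $p_\theta=\exp_\phi(\theta\cdot H-\alpha(\theta))\,p$. The function $\alpha$ is convex. *)

theory Defs
  imports "HOL-Analysis.Analysis"
begin

definition abs_cont_on_interval :: "(real \<Rightarrow> real) \<Rightarrow> real \<Rightarrow> real \<Rightarrow> bool" where
  "abs_cont_on_interval f c d \<longleftrightarrow>
     (\<forall>\<epsilon>>0. \<exists>\<delta>>0. \<forall>(n::nat) (a::nat \<Rightarrow> real) (b::nat \<Rightarrow> real).
        (\<forall>i<n. c \<le> a i \<and> a i \<le> b i \<and> b i \<le> d) \<and>
        (\<forall>i j. i < j \<and> j < n \<longrightarrow> b i \<le> a j) \<and>
        (\<Sum>i<n. b i - a i) < \<delta>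
        \<longrightarrow> (\<Sum>i<n. \<bar>f (b i) - f (a i)\<bar>) < \<epsilon>)"

definition abs_cont_pos :: "(real \<Rightarrow> real) \<Rightarrow> bool" where
  "abs_cont_pos f \<longleftrightarrow> (\<forall>c d. 0 < c \<and> c \<le> d \<longrightarrow> abs_cont_on_interval f c d)"

definition ln_phi :: "(real \<Rightarrow> real) \<Rightarrow> real \<Rightarrow> real" where
  "ln_phi \<phi> v = (LBINT y=1..v. 1 / \<phi> y)"

definition exp_phi :: "(real \<Rightarrow> real) \<Rightarrow> real \<Rightarrow> real" where
  "exp_phi \<phi> = the_inv_into {0<..} (ln_phi \<phi>)"

definition alpha_phi ::
  "(real \<Rightarrow> real) \<Rightarrow> ('x::finite \<Rightarrow> real) \<Rightarrow> ('x \<Rightarrow> real) \<Rightarrow> ('x \<Rightarrow> real ^ 'm) \<Rightarrow> real ^ 'm \<Rightarrow> real" where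
  "alpha_phi \<phi> \<mu> p H \<theta> =
     (THE a. (\<Sum>x\<in>UNIV. exp_phi \<phi> (\<theta> \<bullet> H x - a) * p x * \<mu> x) = 1)"

definition alpha_conj ::
  "(real \<Rightarrow> real) \<Rightarrow> ('x::finite \<Rightarrow> real) \<Rightarrow> ('x \<Rightarrow> real) \<Rightarrow> ('x \<Rightarrow> real ^ 'm) \<Rightarrow> real ^ 'm \<Rightarrow> ereal" where
  "alpha_conj \<phi> \<mu> p H \<eta> = (SUP \<theta>. ereal (\<theta> \<bullet> \<eta> - alpha_phi \<phi> \<mu> p H \<theta>))"

end

theory Submission
  imports Defs
begin


lemma phi_cont:
  assumes ac: "abs_cont_pos \<phi>" and x: "x > 0"
  shows "isCont \<phi> x"
proof -
  have ac2: "abs_cont_on_interval \<phi> (x/2) (2*x)" using ac x unfolding abs_cont_pos_def by auto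
  show ?thesis unfolding isCont_def LIM_eq
  proof (intro allI impI)
    fix r :: real assume r: "0 < r"
    obtain d where d: "d > 0" and H: "\<And>(n::nat) (a::nat \<Rightarrow> real) (b::nat \<Rightarrow> real).
        (\<forall>i<n. x/2 \<le> a i \<and> a i \<le> b i \<and> b i \<le> 2*x) \<and>
        (\<forall>i j. i < j \<and> j < n \<longrightarrow> b i \<le> a j) \<and>
        (\<Sum>i<n. b i - a i) < d
        \<longrightarrow> (\<Sum>i<n. \<bar>\<phi> (b i) - \<phi> (a i)\<bar>) < r"
      using ac2 r unfolding abs_cont_on_interval_def by blast
    show "\<exists>s>0. \<forall>y. y \<noteq> x \<and> norm (y - x) < s \<longrightarrow> norm (\<phi> y - \<phi> x) < r"
    proof (intro exI[of _ "min d (x/2)"] conjI allI impI)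
      show "0 < min d (x/2)" using d x by auto
      fix y assume y: "y \<noteq> x \<and> norm (y - x) < min d (x / 2)"
      have c1: "card {..<1::nat} = 1" by simp
      show "norm (\<phi> y - \<phi> x) < r"
      proof (cases "y < x")
        case True
        have "\<bar>\<phi> x - \<phi> y\<bar> < r"
          using H[of "Suc 0" "\<lambda>_. y" "\<lambda>_. x"] y True x by (auto simp: c1)
        then show ?thesis by (simp add: abs_minus_commute)
      next
        case False
        have "\<bar>\<phi> y - \<phi> x\<bar> < r"
          using H[of "Suc 0" "\<lambda>_. x" "\<lambda>_. y"] y False x by (auto simp: c1)
        then show ?thesis by (simp add: abs_minus_commute)
      qed
    qed
  qed
qed

lemma ln_phi_deriv:
  assumes ac: "abs_cont_pos \<phi>" and pos: "\<And>y. y > 0 \<Longrightarrow> \<phi> y > 0" and x: "x > 0"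
  shows "(ln_phi \<phi> has_real_derivative 1 / \<phi> x) (at x)"
proof -
  define a where "a = min 1 (x/2)"
  define b where "b = max 1 (2*x)"
  have a: "a > 0" "a \<le> 1" "a < x" using x by (auto simp: a_def)
  have b: "1 \<le> b" "x < b" using x by (auto simp: b_def)
  have cont: "continuous_on {a..b} (\<lambda>y. 1 / \<phi> y)"
  proof (intro continuous_at_imp_continuous_on ballI)
    fix y assume "y \<in> {a..b}"
    then have "y > 0" using a by auto
    then show "isCont (\<lambda>y. 1 / \<phi> y) y"
      using phi_cont[OF ac, of y] pos[of y] by (auto intro!: continuous_intros)
  qed
  have "((\<lambda>u. LBINT y=ereal 1..ereal u. 1 / \<phi> y) has_vector_derivative (1 / \<phi> x)) (at x within {a..b})"
    by (rule interval_integral_FTC2) (use a b cont in auto)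
  then have "((\<lambda>u. LBINT y=1..u. 1 / \<phi> y) has_vector_derivative (1 / \<phi> x)) (at x within {a..b})"
    by (simp add: one_ereal_def)
  then have "(ln_phi \<phi> has_vector_derivative (1 / \<phi> x)) (at x)"
    using at_within_Icc_at[of a x b] a b by (simp add: ln_phi_def[abs_def])
  then show ?thesis by (simp add: has_real_derivative_iff_has_vector_derivative)
qed


lemma nn_integral_le_from_parts:
  fixes f :: "real \<Rightarrow> real" and l u :: "nat \<Rightarrow> real"
  assumes incA: "\<And>i j. i \<le> j \<Longrightarrow> {l i..u i} \<subseteq> {l j..u j}"
  and S: "S = (\<Union>i. {l i..u i})"
  and cont: "\<And>i. continuous_on {l i..u i} f"
  and nonneg: "\<And>x. x \<in> S \<Longrightarrow> 0 \<le> f x"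
  and le: "\<And>i. (LBINT y:{l i..u i}. f y) \<le> R"
  shows "(\<integral>\<^sup>+ y\<in>S. ennreal (f y) \<partial>lborel) \<le> ennreal R"
proof -
  define F where "F i y = ennreal (f y) * indicator {l i..u i} y" for i y
  have eqF: "F i = (\<lambda>y. ennreal (indicator {l i..u i} y *\<^sub>R f y))" for i
    by (auto simp: F_def fun_eq_iff split: split_indicator)
  have meas: "F i \<in> borel_measurable lborel" for i
  proof -
    have "(\<lambda>y. indicator {l i..u i} y *\<^sub>R f y) \<in> borel_measurable borel"
      by (rule borel_measurable_continuous_on_indicator) (use cont in auto)
    then show ?thesis unfolding eqF by simp
  qed
  have inc: "incseq F"
    unfolding incseq_def F_def le_fun_def
  proof (intro allI impI)
    fix i j :: nat and y assume "i \<le> j"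
    then have "{l i..u i} \<subseteq> {l j..u j}" by (rule incA)
    then show "ennreal (f y) * indicator {l i..u i} y \<le> ennreal (f y) * indicator {l j..u j} y"
      by (auto split: split_indicator)
  qed
  have sup: "ennreal (f y) * indicator S y = (SUP i. F i y)" for y
  proof (cases "y \<in> S")
    case True
    then obtain i where i: "y \<in> {l i..u i}" using S by auto
    have "(SUP i. F i y) = ennreal (f y)"
    proof (rule antisym)
      show "(SUP i. F i y) \<le> ennreal (f y)"
        by (rule SUP_least) (auto simp: F_def split: split_indicator)
      show "ennreal (f y) \<le> (SUP i. F i y)"
        using SUP_upper[of i UNIV "\<lambda>i. F i y"] i by (auto simp: F_def)
    qed
    then show ?thesis using True by simp
  next
    case False
    then have "F i y = 0" for i using S by (auto simp: F_def)
    then show ?thesis using False by simp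
  qed
  have parts: "integral\<^sup>N lborel (F i) \<le> ennreal R" for i
  proof -
    have int: "integrable lborel (\<lambda>y. indicator {l i..u i} y *\<^sub>R f y)"
      using borel_integrable_atLeastAtMost'[OF cont[of i]] unfolding set_integrable_def .
    have nn: "0 \<le> indicator {l i..u i} y *\<^sub>R f y" for y
      using nonneg[of y] S by (auto split: split_indicator)
    have "integral\<^sup>N lborel (F i) = ennreal (LBINT y:{l i..u i}. f y)"
      unfolding eqF set_lebesgue_integral_def
      by (rule nn_integral_eq_integral[OF int]) (use nn in auto)
    also have "\<dots> \<le> ennreal R" using le[of i] by (rule ennreal_leI)
    finally show ?thesis .
  qed
  have "(\<integral>\<^sup>+ y\<in>S. ennreal (f y) \<partial>lborel) = (\<integral>\<^sup>+ y. (SUP i. F i y) \<partial>lborel)"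
    by (simp add: sup)
  also have "\<dots> = (SUP i. integral\<^sup>N lborel (F i))"
    by (rule nn_integral_monotone_convergence_SUP[OF inc meas])
  also have "\<dots> \<le> ennreal R" by (rule SUP_least) (rule parts)
  finally show ?thesis .
qed


locale phictx =
  fixes \<phi> :: "real \<Rightarrow> real"
  assumes phi_pos: "\<And>y. y > 0 \<Longrightarrow> \<phi> y > 0"
    and phi_ac: "abs_cont_pos \<phi>"
    and div0: "(\<integral>\<^sup>+ y\<in>{0<..1}. ennreal (1 / \<phi> y) \<partial>lborel) = \<infinity>"
    and div1: "(\<integral>\<^sup>+ y\<in>{1..}. ennreal (1 / \<phi> y) \<partial>lborel) = \<infinity>"
begin

abbreviation "L \<equiv> ln_phi \<phi>"

lemma L_deriv: "x > 0 \<Longrightarrow> (L has_real_derivative 1 / \<phi> x) (at x)"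
  by (rule ln_phi_deriv[OF phi_ac phi_pos])

lemma L_cont: "x > 0 \<Longrightarrow> isCont L x"
  using L_deriv DERIV_isCont by blast

lemma L_less: assumes "0 < u" "u < v" shows "L u < L v"
proof (rule DERIV_pos_imp_increasing[OF assms(2)])
  fix x assume "u \<le> x" "x \<le> v"
  then have "x > 0" using assms by auto
  then show "\<exists>y. DERIV L x :> y \<and> 0 < y" using L_deriv[of x] phi_pos[of x] by (intro exI[of _ "1 / \<phi> x"]) auto
qed

lemma cont_on: "0 < a \<Longrightarrow> continuous_on {a..b} (\<lambda>y. 1 / \<phi> y)"
  by (intro continuous_at_imp_continuous_on ballI)
     (auto intro!: continuous_intros phi_cont[OF phi_ac] simp: phi_pos less_imp_neq[symmetric])

lemma L_Icc: "0 < a \<Longrightarrow> a \<le> b \<Longrightarrow> (LBINT y=a..b. 1 / \<phi> y) = (LBINT y:{a..b}. 1 / \<phi> y)"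
  by (rule interval_integral_Icc)

lemma L_one: "L 1 = 0"
  by (simp add: ln_phi_def one_ereal_def[symmetric])

lemma L_big: "\<exists>v\<ge>1. R \<le> L v"
proof (rule ccontr)
  assume "\<not> ?thesis"
  then have lt: "\<And>v. v \<ge> 1 \<Longrightarrow> L v < R" by force
  have "(\<integral>\<^sup>+ y\<in>{1..}. ennreal (1 / \<phi> y) \<partial>lborel) \<le> ennreal R"
  proof (rule nn_integral_le_from_parts[where l="\<lambda>_. 1" and u="\<lambda>i. 1 + real i"])
    show "{1..} = (\<Union>i. {1..1 + real i})"
    proof (auto)
      fix x :: real assume "1 \<le> x"
      obtain n where "x < real n" using reals_Archimedean2 by blast
      then show "\<exists>i. x \<le> 1 + real i" by (intro exI[of _ n]) auto
    qed
    show "continuous_on {1..1 + real i} (\<lambda>y. 1 / \<phi> y)" for i by (rule cont_on) auto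
    show "0 \<le> 1 / \<phi> x" if "x \<in> {1..}" for x using phi_pos[of x] that by auto
    show "(LBINT y:{1..1 + real i}. 1 / \<phi> y) \<le> R" for i
    proof -
      have "(LBINT y:{1..1 + real i}. 1 / \<phi> y) = L (1 + real i)"
        unfolding ln_phi_def using L_Icc[of 1 "1 + real i"] by (simp add: one_ereal_def)
      then show ?thesis using lt[of "1 + real i"] by simp
    qed
  qed auto
  then show False using div1 by (simp add: top_unique)
qed

lemma L_small: "\<exists>v. 0 < v \<and> v \<le> 1 \<and> L v \<le> R"
proof (rule ccontr)
  assume "\<not> ?thesis"
  then have gt: "\<And>v. 0 < v \<Longrightarrow> v \<le> 1 \<Longrightarrow> R < L v" by force
  have "(\<integral>\<^sup>+ y\<in>{0<..1}. ennreal (1 / \<phi> y) \<partial>lborel) \<le> ennreal (-R)"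
  proof (rule nn_integral_le_from_parts[where l="\<lambda>i. 1 / (1 + real i)" and u="\<lambda>_. 1"])
    show "{1 / (1 + real i)..1} \<subseteq> {1 / (1 + real j)..1}" if "i \<le> j" for i j
      using that by (auto intro: order_trans[rotated] simp: frac_le)
    show "{0<..1} = (\<Union>i. {1 / (1 + real i)..1})"
    proof (auto)
      fix x :: real assume x: "0 < x" "x \<le> 1"
      obtain n where n: "1 / x < real n" using reals_Archimedean2 by blast
      have "1 / (1 + real n) \<le> x" using x n by (simp add: field_simps)
      then show "\<exists>i. 1 / (1 + real i) \<le> x" by blast
    next
      fix x :: real and i :: nat assume "1 / (1 + real i) \<le> x"
      moreover have "0 < 1 / (1 + real i)" by simp
      ultimately show "0 < x" by linarith
    qed
    show "continuous_on {1 / (1 + real i)..1} (\<lambda>y. 1 / \<phi> y)" for i by (rule cont_on) auto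
    show "0 \<le> 1 / \<phi> x" if "x \<in> {0<..1}" for x using phi_pos[of x] that by auto
    show "(LBINT y:{1 / (1 + real i)..1}. 1 / \<phi> y) \<le> - R" for i
    proof -
      let ?v = "1 / (1 + real i)"
      have v: "0 < ?v" "?v \<le> 1" by (auto simp: field_simps)
      have "(LBINT y:{?v..1}. 1 / \<phi> y) = (LBINT y=?v..1. 1 / \<phi> y)"
        using L_Icc[of ?v 1] v by (simp add: one_ereal_def)
      also have "\<dots> = - L ?v"
        unfolding ln_phi_def by (subst interval_integral_endpoints_reverse) (simp add: one_ereal_def)
      finally show ?thesis using gt[OF v] by simp
    qed
  qed
  then show False using div0 by (simp add: top_unique)
qed

lemma L_surj: "\<exists>x>0. L x = R"
proof -
  obtain v2 where v2: "v2 \<ge> 1" "R \<le> L v2" using L_big by blast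
  obtain v1 where v1: "0 < v1" "v1 \<le> 1" "L v1 \<le> R" using L_small by blast
  have "\<exists>x\<ge>v1. x \<le> v2 \<and> L x = R"
    by (rule IVT) (use v1 v2 L_cont in auto)
  then obtain x where "x \<ge> v1" "L x = R" by blast
  then show ?thesis using v1 by (intro exI[of _ x]) auto
qed

end

context phictx begin

abbreviation "E \<equiv> exp_phi \<phi>"

lemma L_inj: "inj_on L {0<..}"
  by (rule inj_onI) (metis L_less greaterThan_iff linorder_neqE_linordered_idom less_irrefl)

lemma L_range: "t \<in> L ` {0<..}"
  using L_surj[of t] by force

lemma E_pos: "E t > 0"
  using the_inv_into_into[OF L_inj L_range, of "{0<..}" t] by (simp add: exp_phi_def)

lemma L_E: "L (E t) = t"
  using f_the_inv_into_f[OF L_inj L_range] by (simp add: exp_phi_def)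

lemma E_L: "x > 0 \<Longrightarrow> E (L x) = x"
  using the_inv_into_f_f[OF L_inj] by (simp add: exp_phi_def)

lemma L_le: "0 < u \<Longrightarrow> u \<le> v \<Longrightarrow> L u \<le> L v"
  using L_less[of u v] by (cases "u = v") auto

lemma E_less: "s < t \<Longrightarrow> E s < E t"
proof (rule ccontr)
  assume st: "s < t" and "\<not> E s < E t"
  then have "E t \<le> E s" by simp
  then have "L (E t) \<le> L (E s)" using E_pos by (intro L_le) auto
  then show False using st by (simp add: L_E)
qed

lemma E_le: "s \<le> t \<Longrightarrow> E s \<le> E t"
  using E_less[of s t] by (cases "s = t") auto

lemma E_zero: "E 0 = 1"
  using E_L[of 1] L_one by simp

lemma E_bound: "E t \<le> K \<Longrightarrow> t \<le> L K"
  using L_le[of "E t" K] E_pos[of t] by (simp add: L_E)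

lemma E_cont: "isCont E t"
proof -
  define x where "x = E t"
  have x: "x > 0" using E_pos by (simp add: x_def)
  have zp: "\<And>z. \<bar>z - x\<bar> \<le> x / 2 \<Longrightarrow> z > 0" using x by arith
  have "isCont E (L x)"
    by (rule isCont_inverse_function[where d="x/2"]) (use x zp in \<open>auto simp: E_L L_cont\<close>)
  then show ?thesis by (simp add: x_def L_E)
qed

lemma E_cont'[continuous_intros]: "isCont g a \<Longrightarrow> isCont (\<lambda>x. E (g x)) a"
  using isCont_o2[OF _ E_cont] by blast

end


context phictx begin

lemma alpha_eq:
  fixes \<mu> p :: "'x::finite \<Rightarrow> real" and H :: "'x \<Rightarrow> real ^ 'm"
  assumes mu_pos: "\<And>x. \<mu> x > 0" and p_pos: "\<And>x. p x > 0"
    and p_norm: "(\<Sum>x\<in>UNIV. p x * \<mu> x) = 1"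
  shows "(\<Sum>x\<in>UNIV. E (\<theta> \<bullet> H x - alpha_phi \<phi> \<mu> p H \<theta>) * p x * \<mu> x) = 1"
proof -
  define g where "g a = (\<Sum>x\<in>UNIV. E (\<theta> \<bullet> H x - a) * p x * \<mu> x)" for a
  define B where "B = (\<Sum>x\<in>UNIV. \<bar>\<theta> \<bullet> H x\<bar>)"
  have Bx: "\<bar>\<theta> \<bullet> H x\<bar> \<le> B" for x
    unfolding B_def by (rule member_le_sum) auto
  have pm: "p x * \<mu> x > 0" for x using p_pos[of x] mu_pos[of x] by simp
  have g1: "g B \<le> 1"
  proof -
    have "g B \<le> (\<Sum>x\<in>UNIV. p x * \<mu> x)"
      unfolding g_def
    proof (rule sum_mono)
      fix x
      have "E (\<theta> \<bullet> H x - B) \<le> E 0" using Bx[of x] by (intro E_le) auto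
      then have "E (\<theta> \<bullet> H x - B) * (p x * \<mu> x) \<le> 1 * (p x * \<mu> x)"
        using pm[of x] by (intro mult_right_mono) (auto simp: E_zero)
      then show "E (\<theta> \<bullet> H x - B) * p x * \<mu> x \<le> p x * \<mu> x"
        by (simp add: mult.assoc)
    qed
    then show ?thesis using p_norm by simp
  qed
  have g2: "1 \<le> g (-B)"
  proof -
    have "(\<Sum>x\<in>UNIV. p x * \<mu> x) \<le> g (-B)"
      unfolding g_def
    proof (rule sum_mono)
      fix x
      have "E 0 \<le> E (\<theta> \<bullet> H x - - B)" using Bx[of x] by (intro E_le) auto
      then have "1 * (p x * \<mu> x) \<le> E (\<theta> \<bullet> H x - - B) * (p x * \<mu> x)"
        using pm[of x] by (intro mult_right_mono) (auto simp: E_zero)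
      then show "p x * \<mu> x \<le> E (\<theta> \<bullet> H x - - B) * p x * \<mu> x"
        by (simp add: mult.assoc)
    qed
    then show ?thesis using p_norm by simp
  qed
  have B0: "0 \<le> B" unfolding B_def by (simp add: sum_nonneg)
  have "\<exists>a. -B \<le> a \<and> a \<le> B \<and> g a = 1"
    by (rule IVT2) (use g1 g2 B0 in \<open>auto simp: g_def intro!: continuous_intros\<close>)
  then obtain a where ga: "g a = 1" by blast
  have gdec: "g b < g a" if "a < b" for a b
    unfolding g_def
  proof (rule sum_strict_mono)
    fix x
    have "E (\<theta> \<bullet> H x - b) < E (\<theta> \<bullet> H x - a)" using that by (intro E_less) auto
    then have "E (\<theta> \<bullet> H x - b) * (p x * \<mu> x) < E (\<theta> \<bullet> H x - a) * (p x * \<mu> x)"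
      using pm[of x] by (intro mult_strict_right_mono) auto
    then show "E (\<theta> \<bullet> H x - b) * p x * \<mu> x < E (\<theta> \<bullet> H x - a) * p x * \<mu> x"
      by (simp add: mult.assoc)
  qed auto
  have "\<exists>!a. g a = 1"
  proof (rule ex1I[of _ a])
    show "g a = 1" by (rule ga)
    fix b assume "g b = 1"
    then show "b = a" using gdec[of a b] gdec[of b a] ga by (cases a b rule: linorder_cases) auto
  qed
  then have "g (THE a. g a = 1) = 1" by (rule theI')
  then show ?thesis unfolding alpha_phi_def g_def .
qed

end

theorem theorem1:
  fixes \<mu> p :: "'x::finite \<Rightarrow> real"
    and \<phi> :: "real \<Rightarrow> real"
    and H :: "'x \<Rightarrow> real ^ 'm"
    and \<eta> :: "real ^ 'm"
  assumes mu_pos: "\<And>x. \<mu> x > 0"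
    and p_pos: "\<And>x. p x > 0"
    and p_norm: "(\<Sum>x\<in>UNIV. p x * \<mu> x) = 1"
    and phi_pos: "\<And>y. y > 0 \<Longrightarrow> \<phi> y > 0"
    and phi_mono: "strict_mono_on {0<..} \<phi>"
    and phi_ac: "abs_cont_pos \<phi>"
    and div0: "(\<integral>\<^sup>+ y\<in>{0<..1}. ennreal (1 / \<phi> y) \<partial>lborel) = \<infinity>"
    and div1: "(\<integral>\<^sup>+ y\<in>{1..}. ennreal (1 / \<phi> y) \<partial>lborel) = \<infinity>"
  shows "alpha_conj \<phi> \<mu> p H \<eta> < \<infinity> \<longleftrightarrow> \<eta> \<in> convex hull (range H)"
proof -
  interpret phictx \<phi> using phi_pos phi_ac div0 div1 by unfold_locales auto
  let ?a = "alpha_phi \<phi> \<mu> p H"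
  have aeq: "(\<Sum>x\<in>UNIV. E (\<theta> \<bullet> H x - ?a \<theta>) * p x * \<mu> x) = 1" for \<theta>
    by (rule alpha_eq[OF mu_pos p_pos p_norm])
  have pm: "p x * \<mu> x > 0" for x using p_pos[of x] mu_pos[of x] by simp
  have sup_ge: "ereal (\<theta> \<bullet> \<eta> - ?a \<theta>) \<le> alpha_conj \<phi> \<mu> p H \<eta>" for \<theta>
    unfolding alpha_conj_def by (rule SUP_upper) auto
  show ?thesis
  proof
    assume fin: "alpha_conj \<phi> \<mu> p H \<eta> < \<infinity>"
    show "\<eta> \<in> convex hull (range H)"
    proof (rule ccontr)
      assume nin: "\<eta> \<notin> convex hull (range H)"
      have "closed (convex hull (range H))"
        by (intro compact_imp_closed compact_convex_hull finite_imp_compact) auto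
      then obtain a b where ab: "inner a \<eta> < b" "\<forall>y\<in>convex hull (range H). inner a y > b"
        using separating_hyperplane_closed_point[OF convex_convex_hull _ nin] by blast
      have aH: "inner a (H x) > b" for x
        using ab(2) hull_subset[of "range H" convex] by auto
      define \<delta> where "\<delta> = b - inner a \<eta>"
      have d: "\<delta> > 0" using ab(1) by (simp add: \<delta>_def)
      have key: "t * \<delta> \<le> (t *\<^sub>R (-a)) \<bullet> \<eta> - ?a (t *\<^sub>R (-a))" if t: "t \<ge> 0" for t
      proof -
        let ?\<theta> = "t *\<^sub>R (-a)"
        have "\<exists>x. ?a ?\<theta> \<le> ?\<theta> \<bullet> H x"
        proof (rule ccontr)
          assume "\<not> ?thesis"
          then have lt: "?\<theta> \<bullet> H x - ?a ?\<theta> < 0" for x by (simp add: not_le)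
          have "(\<Sum>x\<in>UNIV. E (?\<theta> \<bullet> H x - ?a ?\<theta>) * p x * \<mu> x) < (\<Sum>x\<in>UNIV. p x * \<mu> x)"
          proof (rule sum_strict_mono)
            fix x
            have "E (?\<theta> \<bullet> H x - ?a ?\<theta>) < E 0" using lt[of x] by (rule E_less)
            then have "E (?\<theta> \<bullet> H x - ?a ?\<theta>) * (p x * \<mu> x) < 1 * (p x * \<mu> x)"
              using pm[of x] by (intro mult_strict_right_mono) (auto simp: E_zero)
            then show "E (?\<theta> \<bullet> H x - ?a ?\<theta>) * p x * \<mu> x < p x * \<mu> x"
              by (simp add: mult.assoc)
          qed auto
          then show False using aeq[of ?\<theta>] p_norm by simp
        qed
        then obtain x where x: "?a ?\<theta> \<le> ?\<theta> \<bullet> H x" by blast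
        have "t * b \<le> t * inner a (H x)" using aH[of x] t by (intro mult_left_mono) auto
        then have "t * \<delta> \<le> ?\<theta> \<bullet> \<eta> - ?\<theta> \<bullet> H x"
          by (simp add: \<delta>_def algebra_simps)
        then show ?thesis using x by simp
      qed
      have "alpha_conj \<phi> \<mu> p H \<eta> \<noteq> \<infinity>" using fin by simp
      then obtain n :: nat where n: "alpha_conj \<phi> \<mu> p H \<eta> < ereal (real n)"
        using less_PInf_Ex_of_nat by blast
      define t where "t = real n / \<delta>"
      have t0: "t \<ge> 0" using d by (simp add: t_def)
      have "ereal (real n) = ereal (t * \<delta>)" using d by (simp add: t_def)
      also have "\<dots> \<le> ereal ((t *\<^sub>R (-a)) \<bullet> \<eta> - ?a (t *\<^sub>R (-a)))" using key[OF t0] by simp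
      also have "\<dots> \<le> alpha_conj \<phi> \<mu> p H \<eta>" by (rule sup_ge)
      finally show False using n by simp
    qed
  next
    assume inh: "\<eta> \<in> convex hull (range H)"
    define C where "C = (\<Sum>x\<in>UNIV. \<bar>L (1 / (p x * \<mu> x))\<bar>)"
    have bnd: "\<theta> \<bullet> \<eta> - ?a \<theta> \<le> C" for \<theta>
    proof -
      have hx: "\<theta> \<bullet> H x \<le> ?a \<theta> + C" for x
      proof -
        have "E (\<theta> \<bullet> H x - ?a \<theta>) * p x * \<mu> x \<le> (\<Sum>x\<in>UNIV. E (\<theta> \<bullet> H x - ?a \<theta>) * p x * \<mu> x)"
          proof (rule member_le_sum)
          fix y
          have "0 < E (\<theta> \<bullet> H y - ?a \<theta>) * (p y * \<mu> y)" using pm[of y] E_pos by simp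
          then show "0 \<le> E (\<theta> \<bullet> H y - ?a \<theta>) * p y * \<mu> y" by (simp add: mult.assoc)
        qed auto
        then have "E (\<theta> \<bullet> H x - ?a \<theta>) * (p x * \<mu> x) \<le> 1" using aeq[of \<theta>] by (simp add: mult.assoc)
        then have "E (\<theta> \<bullet> H x - ?a \<theta>) \<le> 1 / (p x * \<mu> x)" using pm[of x] by (simp add: field_simps)
        then have "\<theta> \<bullet> H x - ?a \<theta> \<le> L (1 / (p x * \<mu> x))" by (rule E_bound)
        also have "\<dots> \<le> \<bar>L (1 / (p x * \<mu> x))\<bar>" by (rule abs_ge_self)
        also have "\<dots> \<le> C" unfolding C_def
          by (rule member_le_sum[where f="\<lambda>x. \<bar>L (1 / (p x * \<mu> x))\<bar>"]) auto
        finally show ?thesis by simp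
      qed
      have "convex hull (range H) \<subseteq> {y. \<theta> \<bullet> y \<le> ?a \<theta> + C}"
        by (rule hull_minimal) (use hx convex_halfspace_le in auto)
      then show ?thesis using inh by auto
    qed
    have "alpha_conj \<phi> \<mu> p H \<eta> \<le> ereal C"
      unfolding alpha_conj_def by (rule SUP_least) (use bnd in auto)
    then show "alpha_conj \<phi> \<mu> p H \<eta> < \<infinity>"
      using le_less_trans[of "alpha_conj \<phi> \<mu> p H \<eta>" "ereal C" \<infinity>] by simp
  qed
qed

end
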